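(* An algebraic quantum hypergroup $(A,\Delta)$ is both of compact type and of discrete type if and only if $A$ is finite-dimensional.
   Context: **Standing definitions.** All algebras are over $\mathbb C$, associative, possibly without identity, with non-degenerate product. $M(A)$ denotes the multiplier algebra and $\iota$ the identity map. *Comultiplication.* A regular comultiplication is a linear map $\Delta:A\to M(A\otimes A)$, not assumed multiplicative, such that: - $\Delta(a)(1\otimes b)$, $(a\otimes1)\Delta(b)$, $\Delta(a)(b\otimes1)$ and $(1\otimes a)\Delta(b)$ lie in $A\otimes A$; - $(a\otimes1\otimes1)(\Delta\otimes\iota)(\Delta(b)(1\otimes c))=(\iota\otimes\Delta)((a\otimes1)\Delta(b))(1\otimes1\otimes c)$. *Counit.* A counit is a homomorphism $\varepsilon$ with $(\varepsilon\otimes\iota)\Delta=\iota=(\iota\otimes\varepsilon)\Delta$. *Integrals.* A left integral is a nonzero $\varphi$ with $(\iota\otimes\varphi)\Delta(a)=\varphi(a)1$ in $M(A)$. A functional is faithful if $f(ab)=0\ \forall b$ or $f(ba)=0\ \forall b$ forces $a=0$. *Antipode.* An antipode relative to a faithful left integral $\varphi$ is a bijective linear anti-homomorphism $S$ with $S((\iota\otimes\varphi)(\Delta(a)(1\otimes b)))=(\iota\otimes\varphi)((1\otimes a)\Delta(b))$. *Algebraic quantum hypergroup.* A pair $(A,\Delta)$ with a regular comultiplication admitting a counit $\varepsilon$, a faithful left integral $\varphi$ and an antipode $S$ relative to $\varphi$. **Types.** - $(A,\Delta)$ is of *compact type* if $A$ has an identity. - A *left co-integral* is a nonzero $h\in A$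 with $ah=\varepsilon(a)h$ for all $a\in A$. - $(A,\Delta)$ is of *discrete type* if a left co-integral exists. *)

theory Defs
  imports Complex_Main
begin

text \<open>An algebra over the complex numbers is modelled by a type of class ring
(associative, not necessarily unital) together with a scalar multiplication
s making it a complex vector space, compatible with the product.\<close>

definition calg :: "(complex \<Rightarrow> 'x::ring \<Rightarrow> 'x) \<Rightarrow> bool" where
  "calg s \<longleftrightarrow> Vector_Spaces.vector_space s \<and>
     (\<forall>c x y. s c (x * y) = s c x * y \<and> s c (x * y) = x * s c y)"

definition nondeg :: "'x::ring itself \<Rightarrow> bool" where
  "nondeg T \<longleftrightarrow> (\<forall>a::'x. (\<forall>b. a * b = 0) \<longrightarrow> a = 0) \<and>
                 (\<forall>a::'x. (\<forall>b. b * a = 0) \<longrightarrow> a = 0)"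

definition fin_dim :: "(complex \<Rightarrow> 'x::ab_group_add \<Rightarrow> 'x) \<Rightarrow> bool" where
  "fin_dim s \<longleftrightarrow> (\<exists>B. finite B \<and> module.span s B = UNIV)"

definition bilin :: "(complex \<Rightarrow> 'u::ab_group_add \<Rightarrow> 'u) \<Rightarrow> (complex \<Rightarrow> 'v::ab_group_add \<Rightarrow> 'v)
   \<Rightarrow> (complex \<Rightarrow> 'w::ab_group_add \<Rightarrow> 'w) \<Rightarrow> ('u \<Rightarrow> 'v \<Rightarrow> 'w) \<Rightarrow> bool" where
  "bilin su sv sw t \<longleftrightarrow> (\<forall>v. Vector_Spaces.linear su sw (\<lambda>u. t u v)) \<and>
                         (\<forall>u. Vector_Spaces.linear sv sw (t u))"

text \<open>(W, t) is a tensor product of U and V: t is bilinear, its range spans W,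
and for linearly independent u_i, a relation sum t u_i v_i = 0 forces all v_i = 0.
This characterises W with t as U tensor V up to unique isomorphism.\<close>

definition is_tensor :: "(complex \<Rightarrow> 'u::ab_group_add \<Rightarrow> 'u) \<Rightarrow> (complex \<Rightarrow> 'v::ab_group_add \<Rightarrow> 'v)
   \<Rightarrow> (complex \<Rightarrow> 'w::ab_group_add \<Rightarrow> 'w) \<Rightarrow> ('u \<Rightarrow> 'v \<Rightarrow> 'w) \<Rightarrow> bool" where
  "is_tensor su sv sw t \<longleftrightarrow>
     Vector_Spaces.vector_space su \<and> Vector_Spaces.vector_space sv \<and> Vector_Spaces.vector_space sw \<and>
     bilin su sv sw t \<and>
     module.span sw {t u v | u v. True} = UNIV \<and>
     (\<forall>F g. finite F \<and> \<not> module.dependent su F \<and> (\<Sum>u\<in>F. t u (g u)) = 0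
              \<longrightarrow> (\<forall>u\<in>F. g u = 0))"

definition tlift :: "(complex \<Rightarrow> 'w::ab_group_add \<Rightarrow> 'w) \<Rightarrow> (complex \<Rightarrow> 'z::ab_group_add \<Rightarrow> 'z)
   \<Rightarrow> ('u \<Rightarrow> 'v \<Rightarrow> 'w) \<Rightarrow> ('u \<Rightarrow> 'v \<Rightarrow> 'z) \<Rightarrow> 'w \<Rightarrow> 'z" where
  "tlift sw sz t f = (SOME F. Vector_Spaces.linear sw sz F \<and> (\<forall>u v. F (t u v) = f u v))"

text \<open>The standing tensor set-up: A with scalar multiplication s1;
A\<otimes>A is the algebra 'b (scalars s2, tensor map t2, product (a\<otimes>b)(c\<otimes>d) = ac\<otimes>bd);
A\<otimes>A\<otimes>A is the algebra 'c = (A\<otimes>A)\<otimes>A (scalars s3, tensor map t3).\<close>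

definition tensor_setup :: "(complex \<Rightarrow> 'a::ring \<Rightarrow> 'a) \<Rightarrow> (complex \<Rightarrow> 'b::ring \<Rightarrow> 'b)
   \<Rightarrow> ('a \<Rightarrow> 'a \<Rightarrow> 'b) \<Rightarrow> (complex \<Rightarrow> 'c::ring \<Rightarrow> 'c) \<Rightarrow> ('b \<Rightarrow> 'a \<Rightarrow> 'c) \<Rightarrow> bool" where
  "tensor_setup s1 s2 t2 s3 t3 \<longleftrightarrow>
     calg s1 \<and> nondeg TYPE('a) \<and> calg s2 \<and> calg s3 \<and>
     is_tensor s1 s1 s2 t2 \<and> is_tensor s2 s1 s3 t3 \<and>
     (\<forall>a b c d. t2 a b * t2 c d = t2 (a * c) (b * d)) \<and>
     (\<forall>x a y b. t3 x a * t3 y b = t3 (x * y) (a * b))"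

text \<open>A multiplier of an algebra X is a pair (L, R) of linear maps
(left action m x = L x, right action x m = R x) with L(xy) = L(x)y,
R(xy) = xR(y) and x L(y) = R(x) y.\<close>

type_synonym 'x mult = "('x \<Rightarrow> 'x) \<times> ('x \<Rightarrow> 'x)"

definition is_mult :: "(complex \<Rightarrow> 'x::ring \<Rightarrow> 'x) \<Rightarrow> 'x mult \<Rightarrow> bool" where
  "is_mult s m \<longleftrightarrow> Vector_Spaces.linear s s (fst m) \<and> Vector_Spaces.linear s s (snd m) \<and>
     (\<forall>x y. fst m (x * y) = fst m x * y) \<and> (\<forall>x y. snd m (x * y) = x * snd m y) \<and>
     (\<forall>x y. x * fst m y = snd m x * y)"

definition mmult :: "'x mult \<Rightarrow> 'x mult \<Rightarrow> 'x mult" where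
  "mmult m n = (fst m \<circ> fst n, snd n \<circ> snd m)"

definition embed :: "'x::ring \<Rightarrow> 'x mult" where
  "embed z = ((\<lambda>x. z * x), (\<lambda>x. x * z))"

definition in_alg :: "'x::ring mult \<Rightarrow> bool" where
  "in_alg m \<longleftrightarrow> (\<exists>z. m = embed z)"

definition elt :: "'x::ring mult \<Rightarrow> 'x" where
  "elt m = (THE z. m = embed z)"

context
  fixes s1 :: "complex \<Rightarrow> 'a::ring \<Rightarrow> 'a"
    and s2 :: "complex \<Rightarrow> 'b::ring \<Rightarrow> 'b"
    and t2 :: "'a \<Rightarrow> 'a \<Rightarrow> 'b"
    and s3 :: "complex \<Rightarrow> 'c::ring \<Rightarrow> 'c"
    and t3 :: "'b \<Rightarrow> 'a \<Rightarrow> 'c"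
begin

definition one_tens :: "'a \<Rightarrow> 'b mult" where
  "one_tens b = (tlift s2 s2 t2 (\<lambda>x y. t2 x (b * y)), tlift s2 s2 t2 (\<lambda>x y. t2 x (y * b)))"

definition tens_one :: "'a \<Rightarrow> 'b mult" where
  "tens_one b = (tlift s2 s2 t2 (\<lambda>x y. t2 (b * x) y), tlift s2 s2 t2 (\<lambda>x y. t2 (x * b) y))"

definition lift3 :: "('a \<Rightarrow> 'a \<Rightarrow> 'a \<Rightarrow> 'z::ab_group_add) \<Rightarrow> (complex \<Rightarrow> 'z \<Rightarrow> 'z) \<Rightarrow> 'c \<Rightarrow> 'z" where
  "lift3 g sz = tlift s3 sz t3 (\<lambda>w c. tlift s2 sz t2 (\<lambda>a b. g a b c) w)"

definition tens_left :: "'a \<Rightarrow> 'b \<Rightarrow> 'c" where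
  "tens_left a w = tlift s2 s3 t2 (\<lambda>b c. t3 (t2 a b) c) w"

definition tens_one_one :: "'a \<Rightarrow> 'c mult" where
  "tens_one_one a = (lift3 (\<lambda>x y z. t3 (t2 (a * x) y) z) s3, lift3 (\<lambda>x y z. t3 (t2 (x * a) y) z) s3)"

definition one_one_tens :: "'a \<Rightarrow> 'c mult" where
  "one_one_tens c = (tlift s3 s3 t3 (\<lambda>w z. t3 w (c * z)), tlift s3 s3 t3 (\<lambda>w z. t3 w (z * c)))"

text \<open>(\<Delta>\<otimes>\<iota>)(x) in M(A\<otimes>A\<otimes>A), for x in A\<otimes>A: on p\<otimes>q it is \<Delta>(p)\<otimes>q.\<close>
definition comult_id :: "('a \<Rightarrow> 'b mult) \<Rightarrow> 'b \<Rightarrow> 'c mult" where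
  "comult_id D x =
    (tlift s3 s3 t3 (\<lambda>y r. tlift s2 s3 t2 (\<lambda>p q. t3 (fst (D p) y) (q * r)) x),
     tlift s3 s3 t3 (\<lambda>y r. tlift s2 s3 t2 (\<lambda>p q. t3 (snd (D p) y) (r * q)) x))"

text \<open>(\<iota>\<otimes>\<Delta>)(x) in M(A\<otimes>A\<otimes>A), for x in A\<otimes>A: on p\<otimes>q it is p\<otimes>\<Delta>(q).\<close>
definition id_comult :: "('a \<Rightarrow> 'b mult) \<Rightarrow> 'b \<Rightarrow> 'c mult" where
  "id_comult D x =
    (lift3 (\<lambda>a b c. tlift s2 s3 t2 (\<lambda>p q. tens_left (p * a) (fst (D q) (t2 b c))) x) s3,
     lift3 (\<lambda>a b c. tlift s2 s3 t2 (\<lambda>p q. tens_left (a * p) (snd (D q) (t2 b c))) x) s3)"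

definition slice_left :: "('a \<Rightarrow> complex) \<Rightarrow> 'b \<Rightarrow> 'a" where
  "slice_left f = tlift s2 s1 t2 (\<lambda>x y. s1 (f x) y)"

definition slice_right :: "('a \<Rightarrow> complex) \<Rightarrow> 'b \<Rightarrow> 'a" where
  "slice_right f = tlift s2 s1 t2 (\<lambda>x y. s1 (f y) x)"

text \<open>Regular comultiplication (not assumed multiplicative).\<close>
definition reg_comult :: "('a \<Rightarrow> 'b mult) \<Rightarrow> bool" where
  "reg_comult D \<longleftrightarrow>
     (\<forall>a. is_mult s2 (D a)) \<and>
     (\<forall>x. Vector_Spaces.linear s1 s2 (\<lambda>a. fst (D a) x) \<and>
          Vector_Spaces.linear s1 s2 (\<lambda>a. snd (D a) x)) \<and>
     (\<forall>a b. in_alg (mmult (D a) (one_tens b))) \<and>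
     (\<forall>a b. in_alg (mmult (tens_one a) (D b))) \<and>
     (\<forall>a b. in_alg (mmult (D a) (tens_one b))) \<and>
     (\<forall>a b. in_alg (mmult (one_tens a) (D b))) \<and>
     (\<forall>a b c. mmult (tens_one_one a) (comult_id D (elt (mmult (D b) (one_tens c))))
             = mmult (id_comult D (elt (mmult (tens_one a) (D b)))) (one_one_tens c))"

definition is_counit :: "('a \<Rightarrow> 'b mult) \<Rightarrow> ('a \<Rightarrow> complex) \<Rightarrow> bool" where
  "is_counit D e \<longleftrightarrow>
     Vector_Spaces.linear s1 (*) e \<and> (\<forall>a b. e (a * b) = e a * e b) \<and>
     (\<forall>a b. slice_left e (elt (mmult (D a) (one_tens b))) = a * b) \<and>
     (\<forall>a b. slice_left e (elt (mmult (one_tens b) (D a))) = b * a) \<and>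
     (\<forall>a b. slice_right e (elt (mmult (D a) (tens_one b))) = a * b) \<and>
     (\<forall>a b. slice_right e (elt (mmult (tens_one b) (D a))) = b * a)"

text \<open>Left integral: (\<iota>\<otimes>\<phi>)\<Delta>(a) = \<phi>(a)1 in M(A), where the multiplier
(\<iota>\<otimes>\<phi>)\<Delta>(a) acts by c \<mapsto> (\<iota>\<otimes>\<phi>)(\<Delta>(a)(c\<otimes>1)) and c \<mapsto> (\<iota>\<otimes>\<phi>)((c\<otimes>1)\<Delta>(a)).\<close>
definition left_integral :: "('a \<Rightarrow> 'b mult) \<Rightarrow> ('a \<Rightarrow> complex) \<Rightarrow> bool" where
  "left_integral D phi \<longleftrightarrow>
     Vector_Spaces.linear s1 (*) phi \<and> (\<exists>a. phi a \<noteq> 0) \<and>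
     (\<forall>a c. slice_right phi (elt (mmult (D a) (tens_one c))) = s1 (phi a) c) \<and>
     (\<forall>a c. slice_right phi (elt (mmult (tens_one c) (D a))) = s1 (phi a) c)"

definition faithful :: "('a \<Rightarrow> complex) \<Rightarrow> bool" where
  "faithful f \<longleftrightarrow> (\<forall>a. (\<forall>b. f (a * b) = 0) \<longrightarrow> a = 0) \<and>
                  (\<forall>a. (\<forall>b. f (b * a) = 0) \<longrightarrow> a = 0)"

definition is_antipode :: "('a \<Rightarrow> 'b mult) \<Rightarrow> ('a \<Rightarrow> complex) \<Rightarrow> ('a \<Rightarrow> 'a) \<Rightarrow> bool" where
  "is_antipode D phi S \<longleftrightarrow>
     bij S \<and> Vector_Spaces.linear s1 s1 S \<and> (\<forall>a b. S (a * b) = S b * S a) \<and>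
     (\<forall>a b. S (slice_right phi (elt (mmult (D a) (one_tens b))))
            = slice_right phi (elt (mmult (one_tens a) (D b))))"

definition is_aqh :: "('a \<Rightarrow> 'b mult) \<Rightarrow> ('a \<Rightarrow> complex) \<Rightarrow> ('a \<Rightarrow> complex) \<Rightarrow> ('a \<Rightarrow> 'a) \<Rightarrow> bool" where
  "is_aqh D e phi S \<longleftrightarrow>
     tensor_setup s1 s2 t2 s3 t3 \<and> reg_comult D \<and> is_counit D e \<and>
     left_integral D phi \<and> faithful phi \<and> is_antipode D phi S"

end

definition compact_type :: "'a::ring itself \<Rightarrow> bool" where
  "compact_type T \<longleftrightarrow> (\<exists>u::'a. \<forall>a. u * a = a \<and> a * u = a)"

definition left_cointegral :: "(complex \<Rightarrow> 'a::ring \<Rightarrow> 'a) \<Rightarrow> ('a \<Rightarrow> complex) \<Rightarrow> 'a \<Rightarrow> bool" where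
  "left_cointegral s1 e h \<longleftrightarrow> h \<noteq> 0 \<and> (\<forall>a. a * h = s1 (e a) h)"

definition discrete_type :: "(complex \<Rightarrow> 'a::ring \<Rightarrow> 'a) \<Rightarrow> ('a \<Rightarrow> complex) \<Rightarrow> bool" where
  "discrete_type s1 e \<longleftrightarrow> (\<exists>h. left_cointegral s1 e h)"

end

theory Submission
  imports Defs
begin


locale tens_ctx =
  U: vector_space su + V: vector_space sv + W: vector_space sw + Z: vector_space sz
  for su :: "complex \<Rightarrow> 'u::ab_group_add \<Rightarrow> 'u"
  and sv :: "complex \<Rightarrow> 'v::ab_group_add \<Rightarrow> 'v"
  and sw :: "complex \<Rightarrow> 'w::ab_group_add \<Rightarrow> 'w"
  and sz :: "complex \<Rightarrow> 'z::ab_group_add \<Rightarrow> 'z" +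
  fixes t :: "'u \<Rightarrow> 'v \<Rightarrow> 'w" and f :: "'u \<Rightarrow> 'v \<Rightarrow> 'z"
  assumes tl1: "\<And>v. Vector_Spaces.linear su sw (\<lambda>u. t u v)"
    and tl2: "\<And>u. Vector_Spaces.linear sv sw (t u)"
    and fl1: "\<And>v. Vector_Spaces.linear su sz (\<lambda>u. f u v)"
    and fl2: "\<And>u. Vector_Spaces.linear sv sz (f u)"
    and spanW: "W.span {t u v | u v. True} = UNIV"
    and indep: "\<And>F g u. finite F \<Longrightarrow> \<not> U.dependent F \<Longrightarrow> (\<Sum>u\<in>F. t u (g u)) = 0 \<Longrightarrow> u \<in> F \<Longrightarrow> g u = 0"
begin

lemma t_sum1: "t (sum g A) v = (\<Sum>x\<in>A. t (g x) v)"
  using module_hom.sum[OF module_hom_linearI[OF tl1]] by blast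
lemma f_sum1: "f (sum g A) v = (\<Sum>x\<in>A. f (g x) v)"
  using module_hom.sum[OF module_hom_linearI[OF fl1]] by blast
lemma t_scale1: "t (su c u) v = sw c (t u v)" using tl1[of v] unfolding Vector_Spaces.linear_iff by blast
lemma t_scale2: "t u (sv c v) = sw c (t u v)" using tl2[of u] unfolding Vector_Spaces.linear_iff by blast
lemma f_scale1: "f (su c u) v = sz c (f u v)" using fl1[of v] unfolding Vector_Spaces.linear_iff by blast
lemma f_scale2: "f u (sv c v) = sz c (f u v)" using fl2[of u] unfolding Vector_Spaces.linear_iff by blast
lemma t_add2: "t u (x + y) = t u x + t u y" using tl2[of u] unfolding Vector_Spaces.linear_iff by blast
lemma f_add2: "f u (x + y) = f u x + f u y" using fl2[of u] unfolding Vector_Spaces.linear_iff by blast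
lemma t_zero2: "t u 0 = 0" using module_hom.zero[OF module_hom_linearI[OF tl2]] by blast
lemma f_zero2: "f u 0 = 0" using module_hom.zero[OF module_hom_linearI[OF fl2]] by blast
lemma t_diff2: "t u (x - y) = t u x - t u y" using module_hom.diff[OF module_hom_linearI[OF tl2]] by blast

definition "Bs = (SOME B. U.independent B \<and> UNIV \<subseteq> U.span B)"

lemma Bs: "U.independent Bs" "U.span Bs = UNIV"
proof -
  obtain B where "U.independent B" "UNIV \<subseteq> U.span B"
    using U.maximal_independent_subset[of UNIV] by blast
  then have "\<exists>B. U.independent B \<and> UNIV \<subseteq> U.span B" by blast
  then have "U.independent Bs \<and> UNIV \<subseteq> U.span Bs"
    unfolding Bs_def by (rule someI_ex)
  then show "U.independent Bs" "U.span Bs = UNIV" by auto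
qed

definition "rep w K g \<longleftrightarrow> finite K \<and> K \<subseteq> Bs \<and> w = (\<Sum>b\<in>K. t b (g b))"
definition "val K g = (\<Sum>b\<in>K. f b (g b))"

lemma rep_extend:
  assumes "rep w K g" "K \<subseteq> L" "finite L" "L \<subseteq> Bs"
  shows "rep w L (\<lambda>b. if b \<in> K then g b else 0)" "val K g = val L (\<lambda>b. if b \<in> K then g b else 0)"
proof -
  have "(\<Sum>b\<in>K. t b (g b)) = (\<Sum>b\<in>L. t b (if b \<in> K then g b else 0))"
    by (rule sum.mono_neutral_cong_left) (use assms in \<open>auto simp: t_zero2\<close>)
  then show "rep w L (\<lambda>b. if b \<in> K then g b else 0)" using assms unfolding rep_def by auto
  show "val K g = val L (\<lambda>b. if b \<in> K then g b else 0)"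
    unfolding val_def
    by (rule sum.mono_neutral_cong_left) (use assms in \<open>auto simp: f_zero2\<close>)
qed

lemma rep_uniq:
  assumes "rep w K g" "rep w K' g'"
  shows "val K g = val K' g'"
proof -
  define L where "L = K \<union> K'"
  define G where "G = (\<lambda>b. if b \<in> K then g b else 0)"
  define G' where "G' = (\<lambda>b. if b \<in> K' then g' b else 0)"
  have L: "finite L" "L \<subseteq> Bs" using assms unfolding rep_def L_def by auto
  have r1: "rep w L G" "val K g = val L G"
    using rep_extend[OF assms(1) _ L] unfolding G_def L_def by auto
  have r2: "rep w L G'" "val K' g' = val L G'"
    using rep_extend[OF assms(2) _ L] unfolding G'_def L_def by auto
  have "(\<Sum>b\<in>L. t b (G b - G' b)) = 0"
    using r1(1) r2(1) unfolding rep_def by (simp add: t_diff2 sum_subtractf)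
  moreover have "\<not> U.dependent L" using Bs(1) L(2) U.independent_mono by blast
  ultimately have "\<And>b. b \<in> L \<Longrightarrow> G b - G' b = 0"
    using indep[of L "\<lambda>b. G b - G' b", OF L(1)] by blast
  then have "val L G = val L G'" unfolding val_def by (intro sum.cong) auto
  then show ?thesis using r1 r2 by simp
qed

lemma rep_t: "\<exists>K g. rep (t u v) K g \<and> val K g = f u v"
proof -
  have "u \<in> U.span Bs" using Bs by auto
  then obtain T r where T: "finite T" "T \<subseteq> Bs" "u = (\<Sum>a\<in>T. su (r a) a)"
    unfolding U.span_explicit by blast
  have "t u v = (\<Sum>a\<in>T. t a (sv (r a) v))"
    by (simp add: T(3) t_sum1 t_scale1 t_scale2)
  moreover have "f u v = (\<Sum>a\<in>T. f a (sv (r a) v))"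
    by (simp add: T(3) f_sum1 f_scale1 f_scale2)
  ultimately have "rep (t u v) T (\<lambda>a. sv (r a) v) \<and> val T (\<lambda>a. sv (r a) v) = f u v"
    using T unfolding rep_def val_def by simp
  then show ?thesis by blast
qed

lemma rep_add: "rep w1 K1 g1 \<Longrightarrow> rep w2 K2 g2 \<Longrightarrow> \<exists>K g. rep (w1 + w2) K g \<and> val K g = val K1 g1 + val K2 g2"
proof -
  assume a: "rep w1 K1 g1" "rep w2 K2 g2"
  define L where "L = K1 \<union> K2"
  have L: "finite L" "L \<subseteq> Bs" using a unfolding rep_def L_def by auto
  define G1 where "G1 = (\<lambda>b. if b \<in> K1 then g1 b else 0)"
  define G2 where "G2 = (\<lambda>b. if b \<in> K2 then g2 b else 0)"
  have r1: "rep w1 L G1" "val K1 g1 = val L G1"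
    using rep_extend[OF a(1) _ L] unfolding G1_def L_def by auto
  have r2: "rep w2 L G2" "val K2 g2 = val L G2"
    using rep_extend[OF a(2) _ L] unfolding G2_def L_def by auto
  have e1: "(\<Sum>b\<in>L. t b (G1 b + G2 b)) = (\<Sum>b\<in>L. t b (G1 b)) + (\<Sum>b\<in>L. t b (G2 b))"
    unfolding t_add2 by (rule sum.distrib)
  have e2: "(\<Sum>b\<in>L. f b (G1 b + G2 b)) = (\<Sum>b\<in>L. f b (G1 b)) + (\<Sum>b\<in>L. f b (G2 b))"
    unfolding f_add2 by (rule sum.distrib)
  have w1: "w1 = (\<Sum>b\<in>L. t b (G1 b))" and w2: "w2 = (\<Sum>b\<in>L. t b (G2 b))"
    using r1(1) r2(1) unfolding rep_def by auto
  have "rep (w1 + w2) L (\<lambda>b. G1 b + G2 b)"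
    using L e1 unfolding rep_def w1 w2 by simp
  moreover have "val L (\<lambda>b. G1 b + G2 b) = val K1 g1 + val K2 g2"
    using e2 r1(2) r2(2) unfolding val_def by simp
  ultimately show ?thesis by blast
qed

lemma rep_scale: "rep w K g \<Longrightarrow> rep (sw c w) K (\<lambda>b. sv c (g b)) \<and> val K (\<lambda>b. sv c (g b)) = sz c (val K g)"
  unfolding rep_def val_def
  by (simp add: t_scale2 f_scale2 W.scale_sum_right Z.scale_sum_right)

lemma rep_ex: "\<exists>K g. rep w K g"
proof -
  let ?R = "{w. \<exists>K g. rep w K g}"
  have "W.subspace ?R"
    unfolding W.subspace_def
  proof (intro conjI ballI allI)
    show "0 \<in> ?R" unfolding rep_def by (auto intro!: exI[of _ "{}"])
    show "x + y \<in> ?R" if xy: "x \<in> ?R" "y \<in> ?R" for x y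
    proof -
      obtain K1 g1 K2 g2 where "rep x K1 g1" "rep y K2 g2" using xy by blast
      from rep_add[OF this] show ?thesis by blast
    qed
    show "sw c x \<in> ?R" if xr: "x \<in> ?R" for c x
    proof -
      obtain K g where "rep x K g" using xr by blast
      from rep_scale[OF this, of c] show ?thesis by blast
    qed
  qed
  moreover have "{t u v | u v. True} \<subseteq> ?R"
  proof
    fix w assume "w \<in> {t u v | u v. True}"
    then obtain u v where "w = t u v" by blast
    with rep_t[of u v] show "w \<in> ?R" by blast
  qed
  ultimately have "W.span {t u v | u v. True} \<subseteq> ?R" by (rule W.span_minimal[rotated])
  then show ?thesis using spanW by blast
qed

definition "Fm w = (SOME z. \<exists>K g. rep w K g \<and> z = val K g)"

lemma Fm: "rep w K g \<Longrightarrow> Fm w = val K g"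
proof -
  assume r: "rep w K g"
  have "\<exists>z. \<exists>K g. rep w K g \<and> z = val K g"
  proof -
    obtain K0 g0 where "rep w K0 g0" using rep_ex by blast
    then show ?thesis by (intro exI[of _ "val K0 g0"] exI[of _ K0] exI[of _ g0]) simp
  qed
  then have "\<exists>K g. rep w K g \<and> Fm w = val K g"
    unfolding Fm_def by (rule someI_ex)
  then obtain K1 g1 where "rep w K1 g1" "Fm w = val K1 g1" by blast
  then show ?thesis using rep_uniq[OF r] by simp
qed

lemma Fm_lin: "Vector_Spaces.linear sw sz Fm"
  unfolding Vector_Spaces.linear_iff
proof (intro conjI allI)
  show "vector_space sw" "vector_space sz" by unfold_locales
  fix x y
  obtain K1 g1 K2 g2 where "rep x K1 g1" "rep y K2 g2" using rep_ex by blast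
  then show "Fm (x + y) = Fm x + Fm y"
  proof -
    assume a: "rep x K1 g1" "rep y K2 g2"
    from rep_add[OF a] obtain K g where "rep (x + y) K g" "val K g = val K1 g1 + val K2 g2" by blast
    then show ?thesis using a by (simp add: Fm)
  qed
next
  fix c x
  obtain K g where "rep x K g" using rep_ex by blast
  then show "Fm (sw c x) = sz c (Fm x)"
  proof -
    assume r: "rep x K g"
    have r2: "rep (sw c x) K (\<lambda>b. sv c (g b))" "val K (\<lambda>b. sv c (g b)) = sz c (val K g)"
      using rep_scale[OF r, of c] by auto
    show ?thesis unfolding Fm[OF r] Fm[OF r2(1)] r2(2) ..
  qed
qed

lemma Fm_t: "Fm (t u v) = f u v"
proof -
  obtain K g where "rep (t u v) K g" "val K g = f u v" using rep_t by blast
  then show ?thesis by (simp add: Fm)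
qed

lemma tlift: "Vector_Spaces.linear sw sz (tlift sw sz t f) \<and> (\<forall>u v. tlift sw sz t f (t u v) = f u v)"
  unfolding tlift_def by (rule someI[where x = Fm]) (simp add: Fm_lin Fm_t)

end

lemma tlift_prop:
  assumes "is_tensor su sv sw t" "vector_space sz" "bilin su sv sz f"
  shows "Vector_Spaces.linear sw sz (tlift sw sz t f)" "tlift sw sz t f (t u v) = f u v"
proof -
  interpret tens_ctx su sv sw sz t f
    using assms unfolding is_tensor_def bilin_def tens_ctx_def tens_ctx_axioms_def by blast
  show "Vector_Spaces.linear sw sz (tlift sw sz t f)" "tlift sw sz t f (t u v) = f u v"
    using tlift by auto
qed

lemma tensor_lin_eq:
  assumes "is_tensor su sv sw t" "Vector_Spaces.linear sw sz F" "Vector_Spaces.linear sw sz G"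
    "\<And>u v. F (t u v) = G (t u v)"
  shows "F = G"
proof
  fix x
  have sp: "module.span sw {t u v | u v. True} = UNIV" using assms(1) unfolding is_tensor_def by blast
  have mp: "module_pair sw sz"
    using assms(2) unfolding Vector_Spaces.linear_def module_pair_def module_iff_vector_space by blast
  show "F x = G x"
    apply (rule module_pair.module_hom_eq_on_span[OF mp module_hom_linearI[OF assms(2)] module_hom_linearI[OF assms(3)], of "{t u v | u v. True}"])
    using assms(4) sp by auto
qed




lemma tensor_rep:
  assumes "is_tensor su sv sw t"
  shows "\<exists>K g. finite K \<and> w = (\<Sum>b\<in>K. t b (g b))"
proof -
  interpret tens_ctx su sv sw sw t t
    using assms unfolding is_tensor_def bilin_def tens_ctx_def tens_ctx_axioms_def by blast
  obtain K g where "rep w K g" using rep_ex by blast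
  then show ?thesis unfolding rep_def by blast
qed

lemma calg_vs: "calg s \<Longrightarrow> vector_space s" unfolding calg_def by blast

lemma lin_add: "Vector_Spaces.linear s1 s2 f \<Longrightarrow> f (x + y) = f x + f y"
  unfolding Vector_Spaces.linear_iff by blast
lemma lin_scale: "Vector_Spaces.linear s1 s2 f \<Longrightarrow> f (s1 c x) = s2 c (f x)"
  unfolding Vector_Spaces.linear_iff by blast
lemma lin_sum: "Vector_Spaces.linear s1 s2 f \<Longrightarrow> f (sum g A) = (\<Sum>x\<in>A. f (g x))"
  using module_hom.sum[OF module_hom_linearI] by blast
lemma lin_zero: "Vector_Spaces.linear s1 s2 f \<Longrightarrow> f 0 = 0"
  using module_hom.zero[OF module_hom_linearI] by blast
lemma lin_diff: "Vector_Spaces.linear s1 s2 f \<Longrightarrow> f (x - y) = f x - f y"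
  using module_hom.diff[OF module_hom_linearI] by blast

lemma bilin_slice:
  assumes vs: "vector_space s" and f: "Vector_Spaces.linear s (*) f"
  shows "bilin s s s (\<lambda>x y. s (f y) x)"
proof -
  interpret vector_space s by fact
  have vc: "vector_space ((*) :: complex \<Rightarrow> complex \<Rightarrow> complex)"
    using f unfolding Vector_Spaces.linear_iff by blast
  show ?thesis unfolding bilin_def
  proof (intro conjI allI)
    fix y show "Vector_Spaces.linear s s (\<lambda>x. s (f y) x)"
      unfolding Vector_Spaces.linear_iff using vs by (simp add: scale_right_distrib mult.commute)
  next
    fix x show "Vector_Spaces.linear s s (\<lambda>y. s (f y) x)"
      unfolding Vector_Spaces.linear_iff using vs lin_add[OF f] lin_scale[OF f]
      by (simp add: scale_left_distrib)
  qed
qed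

lemma bilin_onetens:
  assumes c: "calg s1" and vs2: "vector_space s2" and t: "bilin s1 s1 s2 t"
  shows "bilin s1 s1 s2 (\<lambda>x y. t x (b * y))"
proof -
  have c': "\<And>c x y. s1 c x * y = s1 c (x * y)" "\<And>c x y. x * s1 c y = s1 c (x * y)"
    using c unfolding calg_def by metis+
  have vs1: "vector_space s1" using c by (rule calg_vs)
  have t1: "\<And>v. Vector_Spaces.linear s1 s2 (\<lambda>u. t u v)" and t2: "\<And>u. Vector_Spaces.linear s1 s2 (t u)"
    using t unfolding bilin_def by auto
  show ?thesis unfolding bilin_def
  proof (intro conjI allI)
    fix v show "Vector_Spaces.linear s1 s2 (\<lambda>u. t u (b * v))" by (rule t1)
  next
    fix u show "Vector_Spaces.linear s1 s2 (\<lambda>v. t u (b * v))"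
      unfolding Vector_Spaces.linear_iff using vs1 vs2 lin_add[OF t2] lin_scale[OF t2] c'
      by (simp add: distrib_left)
  qed
qed

lemma bilin_tensone:
  assumes c: "calg s1" and vs2: "vector_space s2" and t: "bilin s1 s1 s2 t"
  shows "bilin s1 s1 s2 (\<lambda>x y. t (b * x) y)"
proof -
  have c': "\<And>c x y. s1 c x * y = s1 c (x * y)" "\<And>c x y. x * s1 c y = s1 c (x * y)"
    using c unfolding calg_def by metis+
  have vs1: "vector_space s1" using c by (rule calg_vs)
  have t1: "\<And>v. Vector_Spaces.linear s1 s2 (\<lambda>u. t u v)" and t2: "\<And>u. Vector_Spaces.linear s1 s2 (t u)"
    using t unfolding bilin_def by auto
  show ?thesis unfolding bilin_def
  proof (intro conjI allI)
    fix u show "Vector_Spaces.linear s1 s2 (\<lambda>v. t (b * u) v)" by (rule t2)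
  next
    fix v show "Vector_Spaces.linear s1 s2 (\<lambda>u. t (b * u) v)"
      unfolding Vector_Spaces.linear_iff using vs1 vs2 lin_add[OF t1] lin_scale[OF t1] c'
      by (simp add: distrib_left)
  qed
qed

lemma elt_in_alg:
  assumes one: "\<And>w. one * w = w \<and> w * one = w" and m: "in_alg m"
  shows "elt m = fst m one"
proof -
  obtain z where z: "m = embed z" using m unfolding in_alg_def by blast
  have "elt (embed z) = z"
    unfolding elt_def
  proof (rule the_equality)
    fix z' assume "embed z = embed z'"
    then have "(\<lambda>x. z * x) = (\<lambda>x. z' * x)" unfolding embed_def by simp
    then have "z * one = z' * one" by metis
    then show "z' = z" using one by simp
  qed simp
  then show ?thesis using z one unfolding embed_def by simp
qed




lemma riesz:
  fixes s :: "complex \<Rightarrow> 'a::ab_group_add \<Rightarrow> 'a"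
  assumes vs: "vector_space s" and fd: "fin_dim s"
    and P1: "\<And>c. Vector_Spaces.linear s (*) (\<lambda>x. P x c)"
    and P2: "\<And>x. Vector_Spaces.linear s (*) (P x)"
    and nd: "\<And>c. (\<forall>x. P x c = 0) \<Longrightarrow> c = 0"
    and f: "Vector_Spaces.linear s (*) f"
  shows "\<exists>c. \<forall>x. f x = P x c"
proof -
  interpret A: vector_space s by fact
  obtain B0 where B0: "finite B0" "A.span B0 = UNIV" using fd unfolding fin_dim_def by blast
  obtain B where B: "B \<subseteq> B0" "A.independent B" "B0 \<subseteq> A.span B"
    using A.maximal_independent_subset[of B0] by blast
  have fB: "finite B" using B(1) B0(1) finite_subset by blast
  have sB: "A.span B = UNIV"
  proof -
    have "A.span B0 \<subseteq> A.span B" using B(3) A.span_mono A.span_span by metis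
    then show ?thesis using B0(2) by blast
  qed
  interpret F: finite_dimensional_vector_space s B using fB B(2) sB by unfold_locales
  define G where "G c = (\<Sum>b\<in>B. s (P b c) b)" for c
  have Glin: "Vector_Spaces.linear s s G"
    unfolding Vector_Spaces.linear_iff G_def
    using vs lin_add[OF P2] lin_scale[OF P2]
    by (simp add: A.scale_left_distrib sum.distrib A.scale_sum_right)
  have coef: "\<And>\<alpha> b. (\<Sum>b\<in>B. s (\<alpha> b) b) = 0 \<Longrightarrow> b \<in> B \<Longrightarrow> \<alpha> b = 0"
    using A.independentD[OF B(2) fB subset_refl] by blast
  have zero_on: "\<And>g x. Vector_Spaces.linear s (*) g \<Longrightarrow> (\<forall>b\<in>B. g b = 0) \<Longrightarrow> g x = 0"
  proof -
    fix g x assume g: "Vector_Spaces.linear s (*) g" and gB: "\<forall>b\<in>B. g b = 0"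
    have "x \<in> A.span B" using sB by blast
    then show "g x = 0"
      using module_hom.eq_0_on_span[OF module_hom_linearI[OF g]] gB by blast
  qed
  have "inj G"
    unfolding module_hom.inj_iff_eq_0[OF module_hom_linearI[OF Glin]]
  proof (intro allI impI)
    fix c assume "G c = 0"
    then have "\<And>b. b \<in> B \<Longrightarrow> P b c = 0" using coef[of "\<lambda>b. P b c"] unfolding G_def by blast
    then have "\<forall>x. P x c = 0" using zero_on[OF P1] by blast
    then show "c = 0" by (rule nd)
  qed
  then have "surj G" using F.linear_inj_imp_surj[OF Glin] by blast
  then obtain c where Gc: "G c = (\<Sum>b\<in>B. s (f b) b)" by (metis surj_def)
  have "(\<Sum>b\<in>B. s (P b c - f b) b) = 0"
    using Gc unfolding G_def by (simp add: A.scale_left_diff_distrib sum_subtractf)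
  then have cB: "\<And>b. b \<in> B \<Longrightarrow> P b c - f b = 0" using coef[of "\<lambda>b. P b c - f b"] by blast
  have dl: "Vector_Spaces.linear s (*) (\<lambda>x. f x - P x c)"
    using f P1[of c] unfolding Vector_Spaces.linear_iff by (simp add: algebra_simps)
  have "\<forall>x. f x - P x c = 0"
    using zero_on[OF dl] cB by (metis minus_diff_eq neg_equal_0_iff_equal)
  then show ?thesis by auto
qed




lemma SR:
  assumes T: "is_tensor s1 s1 s2 t2" and f: "Vector_Spaces.linear s1 (*) f"
  shows "Vector_Spaces.linear s2 s1 (slice_right s1 s2 t2 f)"
    "slice_right s1 s2 t2 f (t2 x y) = s1 (f y) x"
proof -
  have vs: "vector_space s1" using T unfolding is_tensor_def by blast
  show "Vector_Spaces.linear s2 s1 (slice_right s1 s2 t2 f)"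
    "slice_right s1 s2 t2 f (t2 x y) = s1 (f y) x"
    unfolding slice_right_def using tlift_prop[OF T vs bilin_slice[OF vs f]] by auto
qed

lemma OT:
  assumes T: "is_tensor s1 s1 s2 t2" and c: "calg s1"
  shows "Vector_Spaces.linear s2 s2 (fst (one_tens s2 t2 b))"
    "fst (one_tens s2 t2 b) (t2 x y) = t2 x (b * y)"
proof -
  have vs: "vector_space s2" and bl: "bilin s1 s1 s2 t2" using T unfolding is_tensor_def by blast+
  show "Vector_Spaces.linear s2 s2 (fst (one_tens s2 t2 b))"
    "fst (one_tens s2 t2 b) (t2 x y) = t2 x (b * y)"
    unfolding one_tens_def fst_conv using tlift_prop[OF T vs bilin_onetens[OF c vs bl]] by auto
qed

lemma TO:
  assumes T: "is_tensor s1 s1 s2 t2" and c: "calg s1"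
  shows "fst (tens_one s2 t2 b) (t2 x y) = t2 (b * x) y"
proof -
  have vs: "vector_space s2" and bl: "bilin s1 s1 s2 t2" using T unfolding is_tensor_def by blast+
  show ?thesis
    unfolding tens_one_def fst_conv using tlift_prop[OF T vs bilin_tensone[OF c vs bl, of b]] by auto
qed

lemma unit_b:
  assumes T: "is_tensor s1 s1 s2 t2" and c2: "calg s2"
    and mul2: "\<And>a b c d. t2 a b * t2 c d = t2 (a * c) (b * d)"
    and u: "\<And>a. u * a = a \<and> a * u = a"
  shows "t2 u u * w = w \<and> w * t2 u u = w"
proof -
  have vs: "vector_space s2" using c2 by (rule calg_vs)
  interpret B: vector_space s2 by fact
  have c': "\<And>c x y. s2 c x * y = s2 c (x * y)" "\<And>c x y. x * s2 c y = s2 c (x * y)"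
    using c2 unfolding calg_def by metis+
  let ?S = "{w. t2 u u * w = w \<and> w * t2 u u = w}"
  have "B.subspace ?S"
    unfolding B.subspace_def by (auto simp: distrib_left distrib_right c')
  moreover have "{t2 x y | x y. True} \<subseteq> ?S" using mul2 u by auto
  ultimately have "B.span {t2 x y | x y. True} \<subseteq> ?S" by (intro B.span_minimal)
  moreover have "B.span {t2 x y | x y. True} = UNIV" using T unfolding is_tensor_def by blast
  ultimately show ?thesis by blast
qed




theorem mainTheorem18:
  fixes s1 :: "complex \<Rightarrow> 'a::ring \<Rightarrow> 'a"
    and s2 :: "complex \<Rightarrow> 'b::ring \<Rightarrow> 'b"
    and t2 :: "'a \<Rightarrow> 'a \<Rightarrow> 'b"
    and s3 :: "complex \<Rightarrow> 'c::ring \<Rightarrow> 'c"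
    and t3 :: "'b \<Rightarrow> 'a \<Rightarrow> 'c"
    and D :: "'a \<Rightarrow> 'b mult"
    and e phi :: "'a \<Rightarrow> complex"
    and S :: "'a \<Rightarrow> 'a"
  assumes "is_aqh s1 s2 t2 s3 t3 D e phi S"
  shows "(compact_type TYPE('a) \<and> discrete_type s1 e) \<longleftrightarrow> fin_dim s1"
proof -
  have c1: "calg s1" and nd: "nondeg TYPE('a)" and c2: "calg s2"
    and T2: "is_tensor s1 s1 s2 t2"
    and mul2: "\<And>a b c d. t2 a b * t2 c d = t2 (a * c) (b * d)"
    and RC: "reg_comult s1 s2 t2 s3 t3 D" and CU: "is_counit s1 s2 t2 D e"
    and LI: "left_integral s1 s2 t2 D phi" and FA: "faithful phi"
    and AP: "is_antipode s1 s2 t2 D phi S"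
    using assms unfolding is_aqh_def tensor_setup_def by blast+
  have vs1: "vector_space s1" using c1 by (rule calg_vs)
  have vs2: "vector_space s2" using c2 by (rule calg_vs)
  interpret A: vector_space s1 by fact
  have c1': "\<And>c x y. s1 c x * y = s1 c (x * y)" "\<And>c x y. x * s1 c y = s1 c (x * y)"
    using c1 unfolding calg_def by metis+
  have elin: "Vector_Spaces.linear s1 (*) e" and emul: "\<And>a b. e (a * b) = e a * e b"
    using CU unfolding is_counit_def by blast+
  have plin: "Vector_Spaces.linear s1 (*) phi" and pnz: "\<exists>a. phi a \<noteq> 0"
    using LI unfolding left_integral_def by blast+
  have fa1: "\<And>a. (\<forall>b. phi (a * b) = 0) \<Longrightarrow> a = 0" and fa2: "\<And>a. (\<forall>b. phi (b * a) = 0) \<Longrightarrow> a = 0"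
    using FA unfolding faithful_def by blast+
  have t2l1: "\<And>v. Vector_Spaces.linear s1 s2 (\<lambda>u. t2 u v)" and t2l2: "\<And>u. Vector_Spaces.linear s1 s2 (t2 u)"
    using T2 unfolding is_tensor_def bilin_def by blast+
  show ?thesis
  proof
    assume "compact_type TYPE('a) \<and> discrete_type s1 e"
    then have "(\<exists>u::'a. \<forall>a. u * a = a \<and> a * u = a) \<and> (\<exists>h. h \<noteq> 0 \<and> (\<forall>a. a * h = s1 (e a) h))"
      unfolding compact_type_def discrete_type_def left_cointegral_def by blast
    then obtain u :: 'a and h where u: "\<And>a. u * a = a \<and> a * u = a" and hnz: "h \<noteq> 0"
      and hc: "\<And>a. a * h = s1 (e a) h" by blast
    define one where "one = t2 u u"
    have one: "\<And>w. one * w = w \<and> w * one = w" unfolding one_def by (rule unit_b[OF T2 c2 mul2 u])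
    have eltf: "\<And>m. in_alg m \<Longrightarrow> elt m = fst m one" by (rule elt_in_alg[OF one])
    have ismult: "\<And>a. is_mult s2 (D a)" using RC unfolding reg_comult_def by blast
    define X where "X a = fst (D a) one" for a
    have DX: "\<And>a y. fst (D a) y = X a * y"
    proof -
      fix a y
      show "fst (D a) y = X a * y"
        using ismult[of a] one[of y] unfolding is_mult_def X_def by metis
    qed
    have OT1: "\<And>b x y. fst (one_tens s2 t2 b) (t2 x y) = t2 x (b * y)"
      and OTl: "\<And>b. Vector_Spaces.linear s2 s2 (fst (one_tens s2 t2 b))"
      using OT[OF T2 c1] by blast+
    have TO1: "\<And>b x y. fst (tens_one s2 t2 b) (t2 x y) = t2 (b * x) y"
      using TO[OF T2 c1] by blast
    have SRe: "Vector_Spaces.linear s2 s1 (slice_right s1 s2 t2 e)" "\<And>x y. slice_right s1 s2 t2 e (t2 x y) = s1 (e y) x"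
      using SR[OF T2 elin] by blast+
    have SRp: "Vector_Spaces.linear s2 s1 (slice_right s1 s2 t2 phi)" "\<And>x y. slice_right s1 s2 t2 phi (t2 x y) = s1 (phi y) x"
      using SR[OF T2 plin] by blast+
    have ia1: "\<And>a b. in_alg (mmult (D a) (one_tens s2 t2 b))"
      and ia2: "\<And>a b. in_alg (mmult (D a) (tens_one s2 t2 b))"
      and ia3: "\<And>a b. in_alg (mmult (one_tens s2 t2 a) (D b))"
      using RC unfolding reg_comult_def by blast+
    have E1: "\<And>a. elt (mmult (D a) (one_tens s2 t2 h)) = X a * t2 u h"
    proof -
      fix a
      have "elt (mmult (D a) (one_tens s2 t2 h)) = fst (D a) (fst (one_tens s2 t2 h) (t2 u u))"
        using eltf[OF ia1[of a h]] unfolding mmult_def one_def by simp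
      also have "\<dots> = X a * t2 u h" using OT1 DX u by simp
      finally show "elt (mmult (D a) (one_tens s2 t2 h)) = X a * t2 u h" .
    qed
    have E2: "\<And>a. elt (mmult (D a) (tens_one s2 t2 u)) = X a"
    proof -
      fix a
      have "elt (mmult (D a) (tens_one s2 t2 u)) = fst (D a) (fst (tens_one s2 t2 u) (t2 u u))"
        using eltf[OF ia2[of a u]] unfolding mmult_def one_def by simp
      also have "\<dots> = X a" using TO1 u unfolding X_def one_def by simp
      finally show "elt (mmult (D a) (tens_one s2 t2 u)) = X a" .
    qed
    have E3: "\<And>a b. elt (mmult (one_tens s2 t2 a) (D b)) = fst (one_tens s2 t2 a) (X b)"
      using eltf[OF ia3] unfolding mmult_def X_def by simp
    have cu: "\<And>a. slice_right s1 s2 t2 e (X a) = a"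
      using CU u E2 unfolding is_counit_def by metis
    have XH: "\<And>a. X a * t2 u h = t2 a h"
    proof -
      fix a
      obtain K g where K: "finite K" "X a = (\<Sum>b\<in>K. t2 b (g b))" using tensor_rep[OF T2] by blast
      have "X a * t2 u h = (\<Sum>b\<in>K. t2 b (g b) * t2 u h)" unfolding K(2) by (rule sum_distrib_right)
      also have "\<dots> = (\<Sum>b\<in>K. t2 (s1 (e (g b)) b) h)"
        using u hc lin_scale[OF t2l1] lin_scale[OF t2l2] by (simp add: mul2)
      also have "\<dots> = t2 (\<Sum>b\<in>K. s1 (e (g b)) b) h"
        using lin_sum[OF t2l1] by metis
      also have "(\<Sum>b\<in>K. s1 (e (g b)) b) = a"
      proof -
        have "a = slice_right s1 s2 t2 e (X a)" using cu by simp
        also have "\<dots> = (\<Sum>b\<in>K. s1 (e (g b)) b)"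
          unfolding K(2) lin_sum[OF SRe(1)] SRe(2) ..
        finally show ?thesis by simp
      qed
      finally show "X a * t2 u h = t2 a h" .
    qed
    have pnh: "phi h \<noteq> 0"
    proof
      assume "phi h = 0"
      then have "\<forall>b. phi (b * h) = 0" using hc lin_scale[OF plin] by simp
      then show False using fa2 hnz by blast
    qed
    obtain K0 g0 where K0: "finite K0" "X h = (\<Sum>b\<in>K0. t2 b (g0 b))" using tensor_rep[OF T2] by blast
    have Sa: "\<And>a. S (s1 (phi h) a) = (\<Sum>b\<in>K0. s1 (phi (a * g0 b)) b)"
    proof -
      fix a
      have "S (s1 (phi h) a) = slice_right s1 s2 t2 phi (elt (mmult (one_tens s2 t2 a) (D h)))"
        using AP E1 XH SRp(2) unfolding is_antipode_def by metis
      also have "\<dots> = (\<Sum>b\<in>K0. s1 (phi (a * g0 b)) b)"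
        unfolding E3 K0(2) lin_sum[OF OTl] OT1 lin_sum[OF SRp(1)] SRp(2) ..
      finally show "S (s1 (phi h) a) = (\<Sum>b\<in>K0. s1 (phi (a * g0 b)) b)" .
    qed
    have Slin: "Vector_Spaces.linear s1 s1 S" and Sbij: "bij S" using AP unfolding is_antipode_def by blast+
    have "\<And>a. S a \<in> A.span K0"
    proof -
      fix a
      have "S (s1 (phi h) a) \<in> A.span K0"
        unfolding Sa by (intro A.span_sum A.span_scale A.span_base) 
      then have "s1 (inverse (phi h)) (S (s1 (phi h) a)) \<in> A.span K0" by (rule A.span_scale)
      then show "S a \<in> A.span K0" using pnh lin_scale[OF Slin] by simp
    qed
    then have "A.span K0 = UNIV" using Sbij by (metis bij_def surj_def UNIV_eq_I)
    then show "fin_dim s1" unfolding fin_dim_def using K0(1) by blast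
  next
    assume fd: "fin_dim s1"
    have padd: "\<And>x y. phi (x + y) = phi x + phi y" and psc: "\<And>c x. phi (s1 c x) = c * phi x"
      using lin_add[OF plin] lin_scale[OF plin] by auto
    have pdiff: "\<And>x y. phi (x - y) = phi x - phi y" using lin_diff[OF plin] by auto
    have vc: "vector_space ((*) :: complex \<Rightarrow> complex \<Rightarrow> complex)"
      using plin unfolding Vector_Spaces.linear_iff by blast
    have R1: "\<And>f. Vector_Spaces.linear s1 (*) f \<Longrightarrow> \<exists>c. \<forall>x. f x = phi (x * c)"
    proof -
      fix f :: "'a \<Rightarrow> complex" assume f: "Vector_Spaces.linear s1 (*) f"
      show "\<exists>c. \<forall>x. f x = phi (x * c)"
      proof (rule riesz[OF vs1 fd _ _ _ f])
        show "Vector_Spaces.linear s1 (*) (\<lambda>x. phi (x * c))" for c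
          unfolding Vector_Spaces.linear_iff using vs1 vc by (simp add: distrib_right padd psc c1')
        show "Vector_Spaces.linear s1 (*) (\<lambda>c. phi (x * c))" for x
          unfolding Vector_Spaces.linear_iff using vs1 vc by (simp add: distrib_left padd psc c1')
        show "(\<forall>x. phi (x * c) = 0) \<Longrightarrow> c = 0" for c using fa2 by blast
      qed
    qed
    have R2: "\<And>f. Vector_Spaces.linear s1 (*) f \<Longrightarrow> \<exists>c. \<forall>x. f x = phi (c * x)"
    proof -
      fix f :: "'a \<Rightarrow> complex" assume f: "Vector_Spaces.linear s1 (*) f"
      show "\<exists>c. \<forall>x. f x = phi (c * x)"
      proof (rule riesz[OF vs1 fd _ _ _ f])
        show "Vector_Spaces.linear s1 (*) (\<lambda>x. phi (c * x))" for c
          unfolding Vector_Spaces.linear_iff using vs1 vc by (simp add: distrib_left padd psc c1')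
        show "Vector_Spaces.linear s1 (*) (\<lambda>c. phi (c * x))" for x
          unfolding Vector_Spaces.linear_iff using vs1 vc by (simp add: distrib_right padd psc c1')
        show "(\<forall>x. phi (c * x) = 0) \<Longrightarrow> c = 0" for c using fa1 by blast
      qed
    qed
    obtain u1 where u1: "\<And>x. phi x = phi (x * u1)" using R1[OF plin] by blast
    obtain u2 where u2: "\<And>x. phi x = phi (u2 * x)" using R2[OF plin] by blast
    have ru: "\<And>a. a * u1 = a"
    proof -
      fix a
      have "\<forall>b. phi (b * (a * u1 - a)) = 0"
        using u1 by (simp add: right_diff_distrib pdiff mult.assoc[symmetric])
      then show "a * u1 = a" using fa2[of "a * u1 - a"] by simp
    qed
    have lu: "\<And>a. u2 * a = a"
    proof -
      fix a
      have "\<forall>b. phi ((u2 * a - a) * b) = 0"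
        using u2 by (simp add: left_diff_distrib pdiff mult.assoc)
      then show "u2 * a = a" using fa1[of "u2 * a - a"] by simp
    qed
    have "u2 = u1" using ru[of u2] lu[of u1] by simp
    then have cpt: "compact_type TYPE('a)" unfolding compact_type_def using ru lu by metis
    obtain h where hh: "\<And>x. e x = phi (x * h)" using R1[OF elin] by blast
    have hc: "\<And>a. a * h = s1 (e a) h"
    proof -
      fix a
      have "\<forall>b. phi (b * (a * h - s1 (e a) h)) = 0"
      proof
        fix b
        have "phi (b * (a * h - s1 (e a) h)) = phi ((b * a) * h) - e a * phi (b * h)"
          by (simp add: right_diff_distrib pdiff c1' psc mult.assoc)
        also have "\<dots> = 0" using hh[of "b * a"] hh[of b] emul[of b a] by (simp add: mult.commute)
        finally show "phi (b * (a * h - s1 (e a) h)) = 0" .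
      qed
      then show "a * h = s1 (e a) h" using fa2 by force
    qed
    have "h \<noteq> 0"
    proof
      assume h0: "h = 0"
      then have e0: "\<And>x. e x = 0" using hh lin_zero[OF plin] by simp
      have "slice_right s1 s2 t2 e = (\<lambda>_. 0)"
      proof (rule tensor_lin_eq[OF T2])
        show "Vector_Spaces.linear s2 s1 (slice_right s1 s2 t2 e)" using SR[OF T2 elin] by blast
        show "Vector_Spaces.linear s2 s1 (\<lambda>_. 0)"
          unfolding Vector_Spaces.linear_iff using vs1 vs2 by simp
        show "slice_right s1 s2 t2 e (t2 x y) = 0" for x y using SR(2)[OF T2 elin] e0 by simp
      qed
      then have "\<And>a. a * u1 = 0" using CU unfolding is_counit_def by metis
      then have "\<And>a::'a. a = 0" using ru by metis
      then show False using pnz lin_zero[OF plin] by metis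
    qed
    then show "compact_type TYPE('a) \<and> discrete_type s1 e"
      using cpt hc unfolding discrete_type_def left_cointegral_def by blast
  qed
qed


end
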